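(* With the notation of the context, suppose $\delta\in(0,1/2]$ and $\alpha=\frac{1}{\log_2(1/\delta)}$ (so $\alpha\le 1$), and $\frac{\delta}{\log_2(1/\delta)} = 4\kappa\sqrt N + \frac{1}{\sqrt N}$. Then $\mathcal W(x^* )\le -\frac{1}{\sqrt N}$.
   Context: Let $v_1,\dots,v_N$ be an orthonormal family in $\mathbb{R}^d$ and $x^*=-\frac{1}{\sqrt N}\sum_{i=1}^N v_i$. Let $\kappa>0$, $\delta\in(0,1)$, $\alpha>0$. Correlation cones: $C_i=\{x\ne 0: |v_i\cdot x|/\|x\|\ge \kappa\}$. Let $h(x)=2\|x\|^{1+\alpha}$, $\Omega=\{x\in\mathbb{R}^d: \|x\|\in[\delta,1],\ x\notin C_i \text{ for all } i\in[N]\}$, and wall function $\mathcal W(x)=\sup_{y\in\Omega}\{h(y)+\nabla h(y)\cdot(x-y)\}$ (supremum of the empty set is $-\infty$). *)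

theory Defs
  imports "HOL-Analysis.Analysis"
begin

definition corr_cone :: "'a::euclidean_space \<Rightarrow> real \<Rightarrow> 'a set" where
  "corr_cone v \<kappa> = {x. x \<noteq> 0 \<and> \<bar>v \<bullet> x\<bar> / norm x \<ge> \<kappa>}"

definition hfun :: "real \<Rightarrow> 'a::euclidean_space \<Rightarrow> real" where
  "hfun \<alpha> x = 2 * norm x powr (1 + \<alpha>)"

definition grad :: "('a::euclidean_space \<Rightarrow> real) \<Rightarrow> 'a \<Rightarrow> 'a" where
  "grad f y = (THE D. GDERIV f y :> D)"

definition Omega :: "nat \<Rightarrow> (nat \<Rightarrow> 'a::euclidean_space) \<Rightarrow> real \<Rightarrow> real \<Rightarrow> 'a set" where
  "Omega N v \<kappa> \<delta> = {x. \<delta> \<le> norm x \<and> norm x \<le> 1 \<and> (\<forall>i\<in>{1..N}. x \<notin> corr_cone (v i) \<kappa>)}"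

text \<open>Wall function: supremum (in the extended reals, so that Sup {} = -infinity)
  of the tangent planes of h at points of Omega.\<close>
definition wall :: "real \<Rightarrow> 'a::euclidean_space set \<Rightarrow> 'a \<Rightarrow> ereal" where
  "wall \<alpha> \<Omega> x = (SUP y\<in>\<Omega>. ereal (hfun \<alpha> y + grad (hfun \<alpha>) y \<bullet> (x - y)))"

definition xstar :: "nat \<Rightarrow> (nat \<Rightarrow> 'a::euclidean_space) \<Rightarrow> 'a" where
  "xstar N v = - ((1 / sqrt (real N)) *\<^sub>R (\<Sum>i=1..N. v i))"

end

theory Submission
  imports Defs
begin

lemma grad_unique:
  assumes "GDERIV f y :> D0"
  shows "grad f y = D0"
proof -
  have "\<And>D. GDERIV f y :> D \<Longrightarrow> D = D0"
  proof -
    fix D assume "GDERIV f y :> D"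
    hence "(\<lambda>h. h \<bullet> D) = (\<lambda>h. h \<bullet> D0)"
      using assms unfolding gderiv_def by (rule has_derivative_unique)
    hence "(D - D0) \<bullet> D = (D - D0) \<bullet> D0" by metis
    hence "(D - D0) \<bullet> (D - D0) = 0" by (simp add: inner_diff_right)
    thus "D = D0" by simp
  qed
  thus ?thesis unfolding grad_def using assms by (rule the_equality[rotated])
qed

lemma grad_hfun:
  fixes y :: "'a::euclidean_space"
  assumes "y \<noteq> 0"
  shows "grad (hfun \<alpha>) y = (2 * ((1 + \<alpha>) * norm y powr \<alpha>)) *\<^sub>R sgn y"
proof -
  have n: "GDERIV (\<lambda>x. norm x) y :> sgn y" using GDERIV_norm[OF assms] .
  have p: "DERIV (\<lambda>z. z powr (1+\<alpha>)) (norm y) :> (1+\<alpha>) * norm y powr (1 + \<alpha> - 1)"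
    using has_real_derivative_powr[of "norm y" "1+\<alpha>"] assms by simp
  have g1: "GDERIV (\<lambda>x. norm x powr (1+\<alpha>)) y :> ((1+\<alpha>) * norm y powr \<alpha>) *\<^sub>R sgn y"
    using GDERIV_DERIV_compose[OF n p] by simp
  have "GDERIV (\<lambda>x. 2 * norm x powr (1+\<alpha>)) y :> (2 * ((1 + \<alpha>) * norm y powr \<alpha>)) *\<^sub>R sgn y"
    using GDERIV_mult[OF GDERIV_const[of 2] g1] by simp
  thus ?thesis unfolding hfun_def[abs_def] by (rule grad_unique)
qed

theorem mainTheorem2:
  fixes v :: "nat \<Rightarrow> 'a::euclidean_space"
    and N :: nat and \<kappa> \<delta> \<alpha> :: real
  assumes N_pos: "N \<ge> 1"
    and orthonormal: "\<And>i j. i \<in> {1..N} \<Longrightarrow> j \<in> {1..N} \<Longrightarrow> v i \<bullet> v j = (if i = j then 1 else 0)"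
    and kappa_pos: "\<kappa> > 0"
    and delta_pos: "0 < \<delta>" and delta_le: "\<delta> \<le> 1/2"
    and alpha_def: "\<alpha> = 1 / log 2 (1 / \<delta>)"
    and relation: "\<delta> / log 2 (1 / \<delta>) = 4 * \<kappa> * sqrt (real N) + 1 / sqrt (real N)"
  shows "wall \<alpha> (Omega N v \<kappa> \<delta>) (xstar N v) \<le> ereal (- 1 / sqrt (real N))"
proof -
  define c where "c = 1 / sqrt (real N)"
  define L where "L = log 2 (1 / \<delta>)"
  have sN: "sqrt (real N) > 0" using N_pos by simp
  have c_pos: "c > 0" unfolding c_def using sN by simp
  have L1: "L \<ge> 1" unfolding L_def using delta_pos delta_le
    by (simp add: le_log_iff field_simps)
  have a_pos: "\<alpha> > 0" and a_le: "\<alpha> \<le> 1" using L1 alpha_def L_def by auto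
  have rel: "\<delta> * \<alpha> = 4 * \<kappa> * sqrt (real N) + c"
    using relation unfolding alpha_def c_def by simp
  have half: "\<delta> powr \<alpha> = 1/2"
  proof -
    have lnd: "ln \<delta> < 0" using delta_pos delta_le by simp
    have "L = - ln \<delta> / ln 2" unfolding L_def log_def using delta_pos by (simp add: ln_div)
    hence "ln \<delta> = - ln 2 * L" by (simp add: field_simps)
    hence "\<alpha> * ln \<delta> = - ln 2 * (\<alpha> * L)" by simp
    also have "\<alpha> * L = 1" using alpha_def L_def L1 by simp
    finally have "\<alpha> * ln \<delta> = - ln 2" by simp
    hence "ln (\<delta> powr \<alpha>) = ln (1/2)" using delta_pos by (simp add: ln_powr ln_div)
    thus ?thesis using delta_pos by (subst (asm) ln_inj_iff) auto
  qed
  show ?thesis unfolding wall_def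
  proof (rule SUP_least)
    fix y assume yO: "y \<in> Omega N v \<kappa> \<delta>"
    define r where "r = norm y"
    have r1: "\<delta> \<le> r" "r \<le> 1" using yO unfolding Omega_def r_def by auto
    have y0: "y \<noteq> 0" using r1 delta_pos r_def by auto
    have rpos: "r > 0" using y0 r_def by simp
    define s where "s = sgn y \<bullet> xstar N v"
    have cone: "\<bar>v i \<bullet> y\<bar> < \<kappa> * r" if "i \<in> {1..N}" for i
      using yO that y0 rpos unfolding Omega_def corr_cone_def r_def
      by (auto simp: field_simps) (meson atLeastAtMost_iff not_le)
    have "\<bar>\<Sum>i=1..N. v i \<bullet> y\<bar> \<le> (\<Sum>i=1..N. \<kappa> * r)"
      by (rule order_trans[OF sum_abs]) (intro sum_mono, use cone in force)
    hence sb: "\<bar>\<Sum>i=1..N. v i \<bullet> y\<bar> \<le> N * \<kappa> * r" by simp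
    have "s = - c * (\<Sum>i=1..N. v i \<bullet> y) / r"
      unfolding s_def xstar_def c_def sgn_div_norm r_def
      by (simp add: inner_sum_right inner_commute sum_distrib_left[symmetric] field_simps)
    hence "\<bar>s\<bar> = c * \<bar>\<Sum>i=1..N. v i \<bullet> y\<bar> / r" using c_pos rpos by (simp add: abs_mult)
    also have "\<dots> \<le> c * (N * \<kappa> * r) / r"
      using sb c_pos rpos by (intro divide_right_mono mult_left_mono) auto
    also have "\<dots> = sqrt N * \<kappa>" using rpos sN unfolding c_def
      by (simp add: field_simps)
    finally have sabs: "\<bar>s\<bar> \<le> sqrt N * \<kappa>" .
    have val: "hfun \<alpha> y + grad (hfun \<alpha>) y \<bullet> (xstar N v - y)
        = 2 * r powr \<alpha> * ((1+\<alpha>) * s - \<alpha> * r)"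
    proof -
      have "sgn y \<bullet> y = r" unfolding r_def sgn_div_norm using y0
        by (simp add: power2_norm_eq_inner[symmetric] power2_eq_square)
      moreover have "r powr (1+\<alpha>) = r powr \<alpha> * r" using rpos by (simp add: powr_add)
      ultimately show ?thesis unfolding grad_hfun[OF y0] hfun_def s_def r_def[symmetric]
        by (simp add: inner_diff_right algebra_simps)
    qed
    have ra: "r powr \<alpha> \<ge> 1/2" using half r1 delta_pos a_pos
      by (metis powr_mono2 less_imp_le)
    have "(1+\<alpha>) * s \<le> 2 * (sqrt N * \<kappa>)"
    proof -
      have "(1+\<alpha>) * s \<le> (1+\<alpha>) * (sqrt N * \<kappa>)" using sabs a_pos
        by (intro mult_left_mono) auto
      also have "\<dots> \<le> 2 * (sqrt N * \<kappa>)" using a_le sN kappa_pos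
        by (intro mult_right_mono) auto
      finally show ?thesis .
    qed
    hence "(1+\<alpha>) * s - \<alpha> * r \<le> (\<delta> * \<alpha> - c)/2 - \<alpha> * r" using rel by (simp add: mult.commute)
    also have "\<dots> \<le> (- \<delta> * \<alpha> - c)/2" using r1 a_pos
      using mult_left_mono[OF r1(1), of \<alpha>] a_pos by (simp add: field_simps)
    finally have b: "(1+\<alpha>) * s - \<alpha> * r \<le> (- \<delta> * \<alpha> - c)/2" .
    have dc: "\<delta> * \<alpha> \<ge> c" using rel kappa_pos sN by simp
    have "2 * r powr \<alpha> * ((1+\<alpha>) * s - \<alpha> * r) \<le> 2 * r powr \<alpha> * ((- \<delta> * \<alpha> - c)/2)"
      using b by (intro mult_left_mono) auto
    also have "\<dots> \<le> 2 * (1/2) * ((- \<delta> * \<alpha> - c)/2)"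
      using ra dc c_pos by (intro mult_right_mono_neg mult_left_mono) auto
    also have "\<dots> \<le> - c" using dc by simp
    finally show "ereal (hfun \<alpha> y + grad (hfun \<alpha>) y \<bullet> (xstar N v - y)) \<le> ereal (- 1 / sqrt (real N))"
      using val c_def by simp
  qed
qed

end
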